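(* Let $n\ge2$, $p\in\mathbb{Q}[t]$, $q(t)=t\,p(t)$, and $e_1=t_1+\dots+t_n$. Then \[ a_{(p,1,0,\dots,0)}=a_{(p,0,0,\dots,0)}\cdot e_1-a_{(q,0,0,\dots,0)}. \]
   Context: For $p\in\mathbb{Q}[t]$ and nonnegative integers $\lambda_2,\dots,\lambda_n$, $a_{(p,\lambda_2,\dots,\lambda_n)}(t_1,\dots,t_n)$ is the determinant of the $n\times n$ matrix whose first row is $(p(t_1),\dots,p(t_n))$ and whose $k$-th row, for $k=2,\dots,n$, is $(t_1^{\lambda_k+n-k},\dots,t_n^{\lambda_k+n-k})$. *)

theory Defs
  imports "HOL-Computational_Algebra.Polynomial" "Jordan_Normal_Form.Determinant"
begin

text \<open>The alternant a_(p,lambda_2,...,lambda_n) evaluated at (t_1,...,t_n) = (t 0, ..., t (n-1)).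
  Rows and columns are indexed from 0: row 0 is (p(t_1),...,p(t_n)); row i (1 <= i < n),
  i.e. the paper's row k = i+1, is (t_j ^ (lambda_k + n - k))_j.  The exponents lambda_k are
  given by the function lam, indexed by the paper's k (only k = 2..n is used).\<close>
definition alt_det :: "nat \<Rightarrow> rat poly \<Rightarrow> (nat \<Rightarrow> nat) \<Rightarrow> (nat \<Rightarrow> rat) \<Rightarrow> rat" where
  "alt_det n p lam t =
     det (mat n n (\<lambda>(i, j). if i = 0 then poly p (t j) else t j ^ (lam (i + 1) + n - (i + 1))))"

end

theory Submission imports Defs begin

lemma det_scale_sum:
  fixes f :: "nat \<Rightarrow> nat \<Rightarrow> 'a::comm_ring_1" and t :: "nat \<Rightarrow> 'a"
  shows "(\<Sum>i<n. det (mat n n (\<lambda>(k,j). if k = i then t j * f k j else f k j)))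
       = det (mat n n (\<lambda>(k,j). f k j)) * (\<Sum>j<n. t j)"
proof -
  let ?P = "{p. p permutes {0..<n}}"
  have pk: "p \<in> ?P \<Longrightarrow> k < n \<Longrightarrow> p k < n" for k p using permutes_in_image[of p "{0..<n}" k] by auto
  have 1: "det (mat n n (\<lambda>(k,j). if k = i then t j * f k j else f k j))
     = (\<Sum>p\<in>?P. signof p * (t (p i) * (\<Prod>k=0..<n. f k (p k))))" if i: "i < n" for i
    unfolding det_def'[OF mat_carrier]
  proof (rule sum.cong[OF refl])
    fix p assume p: "p \<in> ?P"
    have "(\<Prod>k=0..<n. mat n n (\<lambda>(k,j). if k = i then t j * f k j else f k j) $$ (k, p k))
        = (\<Prod>k=0..<n. (if k = i then t (p k) else 1) * f k (p k))"
      by (rule prod.cong, auto simp: pk[OF p])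
    also have "\<dots> = t (p i) * (\<Prod>k=0..<n. f k (p k))"
      using i by (simp add: prod.distrib prod.delta)
    finally show "signof p * (\<Prod>k=0..<n. mat n n (\<lambda>(k,j). if k = i then t j * f k j else f k j) $$ (k, p k))
       = signof p * (t (p i) * (\<Prod>k=0..<n. f k (p k)))" by simp
  qed
  have 2: "det (mat n n (\<lambda>(k,j). f k j)) = (\<Sum>p\<in>?P. signof p * (\<Prod>k=0..<n. f k (p k)))"
    unfolding det_def'[OF mat_carrier]
    by (rule sum.cong[OF refl], rule arg_cong[where f="(*) _"], rule prod.cong, auto simp: pk)
  have 3: "(\<Sum>i<n. t (p i)) = (\<Sum>j<n. t j)" if p: "p \<in> ?P" for p
  proof -
    have "p permutes {..<n}" using p by (simp add: atLeast0LessThan)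
    then have "bij_betw p {..<n} {..<n}" by (rule permutes_imp_bij)
    then show ?thesis by (rule sum.reindex_bij_betw[of p "{..<n}" "{..<n}" t]) 
  qed
  have "(\<Sum>i<n. det (mat n n (\<lambda>(k,j). if k = i then t j * f k j else f k j)))
     = (\<Sum>i<n. \<Sum>p\<in>?P. signof p * (t (p i) * (\<Prod>k=0..<n. f k (p k))))"
    by (rule sum.cong[OF refl], simp add: 1)
  also have "\<dots> = (\<Sum>p\<in>?P. \<Sum>i<n. signof p * (t (p i) * (\<Prod>k=0..<n. f k (p k))))"
    by (rule sum.swap)
  also have "\<dots> = (\<Sum>p\<in>?P. signof p * (\<Prod>k=0..<n. f k (p k)) * (\<Sum>i<n. t (p i)))"
    by (simp add: sum_distrib_left sum_distrib_right mult_ac)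
  also have "\<dots> = (\<Sum>p\<in>?P. signof p * (\<Prod>k=0..<n. f k (p k)) * (\<Sum>j<n. t j))"
    by (rule sum.cong[OF refl], simp add: 3)
  also have "\<dots> = det (mat n n (\<lambda>(k,j). f k j)) * (\<Sum>j<n. t j)"
    by (simp add: 2 sum_distrib_right)
  finally show ?thesis .
qed

theorem lemma3p9:
  fixes n :: nat and p q :: "rat poly" and t :: "nat \<Rightarrow> rat"
  assumes "n \<ge> 2"
    and "q = [:0, 1:] * p"
  shows "alt_det n p (\<lambda>k. if k = 2 then 1 else 0) t
         = alt_det n p (\<lambda>k. 0) t * (\<Sum>j<n. t j) - alt_det n q (\<lambda>k. 0) t"
proof -
  define f where "f k j = (if k = 0 then poly p (t j) else t j ^ (n - (k+1)))" for k j
  define M where "M i = mat n n (\<lambda>(k,j). if k = i then t j * f k j else f k j)" for i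
  have A: "alt_det n p (\<lambda>k. 0) t = det (mat n n (\<lambda>(k,j). f k j))"
    unfolding alt_det_def f_def by (rule arg_cong[where f=det], rule eq_matI, auto)
  have S: "(\<Sum>i<n. det (M i)) = alt_det n p (\<lambda>k. 0) t * (\<Sum>j<n. t j)"
    unfolding A M_def by (rule det_scale_sum)
  have M0: "det (M 0) = alt_det n q (\<lambda>k. 0) t"
    unfolding alt_det_def M_def f_def
    by (rule arg_cong[where f=det], rule eq_matI, auto simp: assms(2))
  have M1: "det (M 1) = alt_det n p (\<lambda>k. if k = 2 then 1 else 0) t"
    unfolding alt_det_def M_def f_def
  proof (rule arg_cong[where f=det], rule eq_matI)
    fix i j assume "i < dim_row (mat n n (\<lambda>(i, j). if i = 0 then poly p (t j)
             else t j ^ ((if i + 1 = 2 then 1 else 0) + n - (i + 1))))"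
      "j < dim_col (mat n n (\<lambda>(i, j). if i = 0 then poly p (t j)
             else t j ^ ((if i + 1 = 2 then 1 else 0) + n - (i + 1))))"
    then have ij: "i < n" "j < n" by auto
    obtain m where m: "n = Suc (Suc m)" using assms(1) by (metis add_2_eq_Suc le_Suc_ex)
    have "t j * t j ^ (n - Suc (Suc 0)) = t j ^ (n - Suc 0)"
      using m by simp
    then show "mat n n (\<lambda>(k, j). if k = 1 then t j * (if k = 0 then poly p (t j) else t j ^ (n - (k + 1)))
           else if k = 0 then poly p (t j) else t j ^ (n - (k + 1))) $$ (i, j) =
         mat n n (\<lambda>(i, j). if i = 0 then poly p (t j)
             else t j ^ ((if i + 1 = 2 then 1 else 0) + n - (i + 1))) $$ (i, j)"
      using ij assms(1) by auto
  qed auto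
  have M2: "det (M i) = 0" if i: "2 \<le> i" "i < n" for i
  proof (rule det_identical_rows[of "M i" n i "i - 1"])
    show "row (M i) i = row (M (i)) (i - 1)"
    proof (rule eq_vecI)
      fix j assume "j < dim_vec (row (M i) (i - 1))"
      then have j: "j < n" unfolding M_def by simp
      have "t j * t j ^ (n - (i+1)) = t j ^ (n - i)"
        using i by (metis Suc_diff_Suc add.commute plus_1_eq_Suc power_Suc)
      then show "row (M i) i $ j = row (M i) (i - 1) $ j"
        using i j unfolding M_def f_def by (auto simp: row_def)
    qed (simp add: M_def)
  qed (use i in \<open>auto simp: M_def\<close>)
  have U: "{..<n} = {0, 1} \<union> {2..<n}" using assms(1) by auto
  have "(\<Sum>i<n. det (M i)) = det (M 0) + det (M 1) + (\<Sum>i\<in>{2..<n}. det (M i))"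
    unfolding U by (subst sum.union_disjoint) auto
  also have "(\<Sum>i\<in>{2..<n}. det (M i)) = 0" by (rule sum.neutral) (auto simp: M2)
  finally show ?thesis using S M0 M1 by simp
qed

end
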